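(* Let $(A,\mathcal H)$ be a left Hopf algebroid such that ${}_s\mathcal H$ is $A$-flat. Let $B$ be a right $\mathcal H$-comodule $A^o$-subring of $\mathcal H$ via $t$ such that the inclusion $B\to\mathcal H$ is a pure morphism of right $B$-modules and $\gamma(B)\subseteq B\otimes_{A^o}\mathcal H$. Then $B=\mathcal H^{\mathrm{co}\,\mathcal H/\mathcal HB^+}$.
   Context: $\Bbbk$ is a field. A left bialgebroid $(A,\mathcal H)$: $\Bbbk$-algebras $A,\mathcal H$, algebra maps $s:A\to\mathcal H$, $t:A^o\to\mathcal H$ with commuting images, $A$-bilinear $\Delta:\mathcal H\to\mathcal H\otimes_A\mathcal H$, $\varepsilon:\mathcal H\to A$ (bimodule structure $a\cdot h\cdot b=s(a)t(b)h$; $\mathcal H\otimes_A\mathcal H$ = quotient of $\mathcal H\otimes\mathcal H$ by span of $t(a)x\otimes y-x\otimes s(a)y$), with $(\mathcal H,\Delta,\varepsilon)$ a coassociative counital $A$-coring, $\Delta$ an algebra map into the Takeuchi product $\{\sum x_i\otimes_Ay_i:\sum x_it(a)\otimes_Ay_i=\sum x_i\otimes_Ay_is(a)\ \forall a\}$, $\varepsilon(xs(\varepsilon(y)))=\varepsilon(xy)=\varepsilon(xt(\varepsilon(y)))$, $\varepsilon(1)=1$; $\Delta(x)=\sum x_1\otimes_Ax_2$, $\mathcal H^+=\ker\varepsilon$, $B^+=B\cap\mathcal H^+$. It is a left Hopf algebroid if $\beta:\mathcal H\otimes_{A^o}\mathcal H\to\mathcal H\otimes_A\mathcal H$, $x\otimes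 y\mapsto\sum x_1\otimes_Ax_2y$ is bijective ($\mathcal H\otimes_{A^o}\mathcal H$ = quotient by span of $xt(a)\otimes y-x\otimes t(a)y$); $\gamma(x)=\beta^{-1}(x\otimes_A1)$, and "$\gamma(B)\subseteq B\otimes_{A^o}\mathcal H$" means $\gamma(B)$ lies in the image of $B\otimes_{A^o}\mathcal H\to\mathcal H\otimes_{A^o}\mathcal H$. "${}_s\mathcal H$ is $A$-flat": flat as left $A$-module via $s$. A right $\mathcal H$-comodule $A^o$-subring via $t$: a subalgebra $B\supseteq t(A)$ with coassociative counital right $A$-linear coaction $\delta:B\to B\otimes_A\mathcal H$ ($b\cdot a=t(a)b$; $\mathcal H$ left via $s$) with $(\iota\otimes_A\mathcal H)\delta=\Delta\iota$. For a left ideal $I$ with $\varepsilon(I)=0$ and $\Delta(I)\subseteq$ image of $I\otimes_A\mathcal H+\mathcal H\otimes_AI$ (e.g. $I=\mathcal HB^+$), with projection $\pi$: $\mathcal H^{\mathrm{co}\,\mathcal H/I}=\{x:\sum\pi(x_1)\otimes_Ax_2=\pi(1)\otimes_Ax\}$. *)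

theory Defs
  imports Main "HOL-Library.Poly_Mapping"
begin

text \<open>Elements of a tensor product M (x)_R N are represented by formal integer
combinations of pairs, i.e. elements of the free abelian group (M x N =>0 int),
modulo the subgroup of tensor relations defined below.\<close>

definition lift :: "('x \<Rightarrow> ('y \<Rightarrow>\<^sub>0 int)) \<Rightarrow> ('x \<Rightarrow>\<^sub>0 int) \<Rightarrow> ('y \<Rightarrow>\<^sub>0 int)" where
  "lift F X = (\<Sum>p\<in>Poly_Mapping.keys X. \<Sum>q\<in>Poly_Mapping.keys (F p). Poly_Mapping.single q (Poly_Mapping.lookup X p * Poly_Mapping.lookup (F p) q))"

definition tmap :: "('m \<Rightarrow> 'm2) \<Rightarrow> ('n \<Rightarrow> 'n2) \<Rightarrow> ('m \<times> 'n \<Rightarrow>\<^sub>0 int) \<Rightarrow> ('m2 \<times> 'n2 \<Rightarrow>\<^sub>0 int)" where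
  "tmap f g X = lift (\<lambda>(x, y). Poly_Mapping.single (f x, g y) 1) X"

definition ev :: "('x \<Rightarrow> 'r::ring_1) \<Rightarrow> ('x \<Rightarrow>\<^sub>0 int) \<Rightarrow> 'r" where
  "ev F X = (\<Sum>p\<in>Poly_Mapping.keys X. of_int (Poly_Mapping.lookup X p) * F p)"

text \<open>The subgroup of tensor relations for M (x)_R N, where M is a right R-module
(carrier M, addition pM, action aM) and N a left R-module (carrier N, addition pN,
action aN), R a subset of a ring.\<close>
inductive_set tens_rel ::
  "('m \<Rightarrow> 'm \<Rightarrow> 'm) \<Rightarrow> ('n \<Rightarrow> 'n \<Rightarrow> 'n) \<Rightarrow> ('m \<Rightarrow> 'r \<Rightarrow> 'm) \<Rightarrow> ('r \<Rightarrow> 'n \<Rightarrow> 'n)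
   \<Rightarrow> 'm set \<Rightarrow> 'n set \<Rightarrow> 'r set \<Rightarrow> ('m \<times> 'n \<Rightarrow>\<^sub>0 int) set"
  for pM pN aM aN M N R where
  tr_zero: "0 \<in> tens_rel pM pN aM aN M N R"
| tr_add: "x \<in> tens_rel pM pN aM aN M N R \<Longrightarrow> y \<in> tens_rel pM pN aM aN M N R
           \<Longrightarrow> x + y \<in> tens_rel pM pN aM aN M N R"
| tr_neg: "x \<in> tens_rel pM pN aM aN M N R \<Longrightarrow> - x \<in> tens_rel pM pN aM aN M N R"
| tr_addl: "m \<in> M \<Longrightarrow> m' \<in> M \<Longrightarrow> n \<in> N \<Longrightarrow>
     Poly_Mapping.single (pM m m', n) 1 - Poly_Mapping.single (m, n) 1 - Poly_Mapping.single (m', n) 1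
       \<in> tens_rel pM pN aM aN M N R"
| tr_addr: "m \<in> M \<Longrightarrow> n \<in> N \<Longrightarrow> n' \<in> N \<Longrightarrow>
     Poly_Mapping.single (m, pN n n') 1 - Poly_Mapping.single (m, n) 1 - Poly_Mapping.single (m, n') 1
       \<in> tens_rel pM pN aM aN M N R"
| tr_bal: "m \<in> M \<Longrightarrow> r \<in> R \<Longrightarrow> n \<in> N \<Longrightarrow>
     Poly_Mapping.single (aM m r, n) 1 - Poly_Mapping.single (m, aN r n) 1 \<in> tens_rel pM pN aM aN M N R"

text \<open>H (x)_A H for a bialgebroid: H right A-module via x.a = t(a) x,
left A-module via a.y = s(a) y. The first factor may be restricted to a subset M1
(e.g. B (x)_A H).\<close>
definition tensA :: "('a \<Rightarrow> 'h::ring_1) \<Rightarrow> ('a \<Rightarrow> 'h) \<Rightarrow> 'h set \<Rightarrow> ('h \<times> 'h \<Rightarrow>\<^sub>0 int) set" where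
  "tensA s t M1 = tens_rel (+) (+) (\<lambda>x a. t a * x) (\<lambda>a y. s a * y) M1 UNIV UNIV"

definition tensAo :: "('a \<Rightarrow> 'h::ring_1) \<Rightarrow> ('h \<times> 'h \<Rightarrow>\<^sub>0 int) set" where
  "tensAo t = tens_rel (+) (+) (\<lambda>x a. x * t a) (\<lambda>a y. t a * y) UNIV UNIV UNIV"

text \<open>Threefold tensor M1 (x)_A H (x)_A H (M1 a subset of H closed under t(A) left multiplication).\<close>
inductive_set tens3_rel :: "('a \<Rightarrow> 'h::ring_1) \<Rightarrow> ('a \<Rightarrow> 'h) \<Rightarrow> 'h set \<Rightarrow> ('h \<times> 'h \<times> 'h \<Rightarrow>\<^sub>0 int) set"
  for s t M1 where
  t3_zero: "0 \<in> tens3_rel s t M1"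
| t3_add: "x \<in> tens3_rel s t M1 \<Longrightarrow> y \<in> tens3_rel s t M1 \<Longrightarrow> x + y \<in> tens3_rel s t M1"
| t3_neg: "x \<in> tens3_rel s t M1 \<Longrightarrow> - x \<in> tens3_rel s t M1"
| t3_add1: "x \<in> M1 \<Longrightarrow> x' \<in> M1 \<Longrightarrow>
    Poly_Mapping.single (x + x', y, z) 1 - Poly_Mapping.single (x, y, z) 1 - Poly_Mapping.single (x', y, z) 1
      \<in> tens3_rel s t M1"
| t3_add2: "x \<in> M1 \<Longrightarrow>
    Poly_Mapping.single (x, y + y', z) 1 - Poly_Mapping.single (x, y, z) 1 - Poly_Mapping.single (x, y', z) 1
      \<in> tens3_rel s t M1"
| t3_add3: "x \<in> M1 \<Longrightarrow>
    Poly_Mapping.single (x, y, z + z') 1 - Poly_Mapping.single (x, y, z) 1 - Poly_Mapping.single (x, y, z') 1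
      \<in> tens3_rel s t M1"
| t3_bal1: "x \<in> M1 \<Longrightarrow>
    Poly_Mapping.single (t a * x, y, z) 1 - Poly_Mapping.single (x, s a * y, z) 1 \<in> tens3_rel s t M1"
| t3_bal2: "x \<in> M1 \<Longrightarrow>
    Poly_Mapping.single (x, t a * y, z) 1 - Poly_Mapping.single (x, y, s a * z) 1 \<in> tens3_rel s t M1"

definition comul_left :: "('h \<Rightarrow> ('h \<times> 'h \<Rightarrow>\<^sub>0 int)) \<Rightarrow> ('h \<times> 'h \<Rightarrow>\<^sub>0 int) \<Rightarrow> ('h \<times> 'h \<times> 'h \<Rightarrow>\<^sub>0 int)" where
  "comul_left D1 X = lift (\<lambda>(x, y). lift (\<lambda>(u, v). Poly_Mapping.single (u, v, y) 1) (D1 x)) X"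

definition comul_right :: "('h \<Rightarrow> ('h \<times> 'h \<Rightarrow>\<^sub>0 int)) \<Rightarrow> ('h \<times> 'h \<Rightarrow>\<^sub>0 int) \<Rightarrow> ('h \<times> 'h \<times> 'h \<Rightarrow>\<^sub>0 int)" where
  "comul_right D X = lift (\<lambda>(x, y). lift (\<lambda>(u, v). Poly_Mapping.single (x, u, v) 1) (D y)) X"

definition tmult :: "('h::ring_1 \<times> 'h \<Rightarrow>\<^sub>0 int) \<Rightarrow> ('h \<times> 'h \<Rightarrow>\<^sub>0 int) \<Rightarrow> ('h \<times> 'h \<Rightarrow>\<^sub>0 int)" where
  "tmult X Y = lift (\<lambda>(x1, x2). lift (\<lambda>(y1, y2). Poly_Mapping.single (x1 * y1, x2 * y2) 1) Y) X"

definition left_bialgebroid ::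
  "('k::field \<Rightarrow> 'a::ring_1) \<Rightarrow> ('k \<Rightarrow> 'h::ring_1) \<Rightarrow> ('a \<Rightarrow> 'h) \<Rightarrow> ('a \<Rightarrow> 'h)
   \<Rightarrow> ('h \<Rightarrow> ('h \<times> 'h \<Rightarrow>\<^sub>0 int)) \<Rightarrow> ('h \<Rightarrow> 'a) \<Rightarrow> bool" where
  "left_bialgebroid \<iota> \<kappa> s t \<Delta> \<epsilon> \<longleftrightarrow>
    \<comment> \<open>A and H are k-algebras (structure maps iota, kappa central ring homs)\<close>
    \<iota> 1 = 1 \<and> (\<forall>c d. \<iota> (c + d) = \<iota> c + \<iota> d \<and> \<iota> (c * d) = \<iota> c * \<iota> d)
    \<and> (\<forall>c a. \<iota> c * a = a * \<iota> c)
    \<and> \<kappa> 1 = 1 \<and> (\<forall>c d. \<kappa> (c + d) = \<kappa> c + \<kappa> d \<and> \<kappa> (c * d) = \<kappa> c * \<kappa> d)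
    \<and> (\<forall>c h. \<kappa> c * h = h * \<kappa> c)
    \<comment> \<open>s : A -> H and t : A^o -> H are k-algebra maps with commuting images\<close>
    \<and> s 1 = 1 \<and> (\<forall>a b. s (a + b) = s a + s b \<and> s (a * b) = s a * s b)
    \<and> t 1 = 1 \<and> (\<forall>a b. t (a + b) = t a + t b \<and> t (a * b) = t b * t a)
    \<and> (\<forall>c. s (\<iota> c) = \<kappa> c \<and> t (\<iota> c) = \<kappa> c)
    \<and> (\<forall>a b. s a * t b = t b * s a)
    \<comment> \<open>Delta additive and A-bilinear\<close>
    \<and> (\<forall>x y. \<Delta> (x + y) - (\<Delta> x + \<Delta> y) \<in> tensA s t UNIV)
    \<and> (\<forall>a b x. \<Delta> (s a * t b * x) - tmap (\<lambda>u. s a * u) (\<lambda>v. t b * v) (\<Delta> x) \<in> tensA s t UNIV)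
    \<comment> \<open>epsilon additive and A-bilinear\<close>
    \<and> (\<forall>x y. \<epsilon> (x + y) = \<epsilon> x + \<epsilon> y)
    \<and> (\<forall>a b x. \<epsilon> (s a * t b * x) = a * \<epsilon> x * b)
    \<comment> \<open>coassociativity\<close>
    \<and> (\<forall>x. comul_left \<Delta> (\<Delta> x) - comul_right \<Delta> (\<Delta> x) \<in> tens3_rel s t UNIV)
    \<comment> \<open>counitality: (eps (x) H) Delta = id = (H (x) eps) Delta\<close>
    \<and> (\<forall>x. ev (\<lambda>(u, v). s (\<epsilon> u) * v) (\<Delta> x) = x)
    \<and> (\<forall>x. ev (\<lambda>(u, v). t (\<epsilon> v) * u) (\<Delta> x) = x)
    \<comment> \<open>Delta lands in the Takeuchi product and is an algebra map\<close>
    \<and> (\<forall>x a. tmap (\<lambda>u. u * t a) id (\<Delta> x) - tmap id (\<lambda>v. v * s a) (\<Delta> x) \<in> tensA s t UNIV)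
    \<and> (\<forall>x y. \<Delta> (x * y) - tmult (\<Delta> x) (\<Delta> y) \<in> tensA s t UNIV)
    \<and> \<Delta> 1 - Poly_Mapping.single (1, 1) 1 \<in> tensA s t UNIV
    \<comment> \<open>epsilon axioms\<close>
    \<and> (\<forall>x y. \<epsilon> (x * s (\<epsilon> y)) = \<epsilon> (x * y) \<and> \<epsilon> (x * y) = \<epsilon> (x * t (\<epsilon> y)))
    \<and> \<epsilon> 1 = 1"

text \<open>The Galois map beta : H (x)_{A^o} H -> H (x)_A H, x (x) y |-> x_1 (x) x_2 y, on representatives.\<close>
definition galois_beta :: "('h::ring_1 \<Rightarrow> ('h \<times> 'h \<Rightarrow>\<^sub>0 int)) \<Rightarrow> ('h \<times> 'h \<Rightarrow>\<^sub>0 int) \<Rightarrow> ('h \<times> 'h \<Rightarrow>\<^sub>0 int)" where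
  "galois_beta \<Delta> X = lift (\<lambda>(x, y). tmap id (\<lambda>v. v * y) (\<Delta> x)) X"

definition left_hopf_algebroid ::
  "('k::field \<Rightarrow> 'a::ring_1) \<Rightarrow> ('k \<Rightarrow> 'h::ring_1) \<Rightarrow> ('a \<Rightarrow> 'h) \<Rightarrow> ('a \<Rightarrow> 'h)
   \<Rightarrow> ('h \<Rightarrow> ('h \<times> 'h \<Rightarrow>\<^sub>0 int)) \<Rightarrow> ('h \<Rightarrow> 'a) \<Rightarrow> bool" where
  "left_hopf_algebroid \<iota> \<kappa> s t \<Delta> \<epsilon> \<longleftrightarrow> left_bialgebroid \<iota> \<kappa> s t \<Delta> \<epsilon>
    \<and> (\<forall>X Y. galois_beta \<Delta> X - galois_beta \<Delta> Y \<in> tensA s t UNIV \<longrightarrow> X - Y \<in> tensAo t)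
    \<and> (\<forall>Z. \<exists>X. galois_beta \<Delta> X - Z \<in> tensA s t UNIV)"

text \<open>gamma(B) is contained in (the image of) B (x)_{A^o} H: for each b in B, gamma(b) = beta^{-1}(b (x) 1)
has a representative supported on B x H.\<close>
definition gamma_in :: "('a \<Rightarrow> 'h::ring_1) \<Rightarrow> ('a \<Rightarrow> 'h) \<Rightarrow> ('h \<Rightarrow> ('h \<times> 'h \<Rightarrow>\<^sub>0 int)) \<Rightarrow> 'h set \<Rightarrow> bool" where
  "gamma_in s t \<Delta> B \<longleftrightarrow> (\<forall>b\<in>B. \<exists>X. Poly_Mapping.keys X \<subseteq> B \<times> UNIV
      \<and> galois_beta \<Delta> X - Poly_Mapping.single (b, 1) 1 \<in> tensA s t UNIV)"

definition ab_grp :: "'m set \<Rightarrow> ('m \<Rightarrow> 'm \<Rightarrow> 'm) \<Rightarrow> 'm \<Rightarrow> bool" where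
  "ab_grp M p z \<longleftrightarrow> z \<in> M \<and> (\<forall>x\<in>M. \<forall>y\<in>M. p x y \<in> M)
    \<and> (\<forall>x\<in>M. \<forall>y\<in>M. \<forall>w\<in>M. p (p x y) w = p x (p y w))
    \<and> (\<forall>x\<in>M. \<forall>y\<in>M. p x y = p y x) \<and> (\<forall>x\<in>M. p z x = x)
    \<and> (\<forall>x\<in>M. \<exists>y\<in>M. p x y = z)"

definition rmod :: "'r::ring_1 set \<Rightarrow> 'm set \<Rightarrow> ('m \<Rightarrow> 'm \<Rightarrow> 'm) \<Rightarrow> 'm \<Rightarrow> ('m \<Rightarrow> 'r \<Rightarrow> 'm) \<Rightarrow> bool" where
  "rmod R M p z act \<longleftrightarrow> ab_grp M p z
    \<and> (\<forall>m\<in>M. \<forall>r\<in>R. act m r \<in> M)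
    \<and> (\<forall>m\<in>M. \<forall>m'\<in>M. \<forall>r\<in>R. act (p m m') r = p (act m r) (act m' r))
    \<and> (\<forall>m\<in>M. \<forall>r\<in>R. \<forall>r'\<in>R. act m (r + r') = p (act m r) (act m r'))
    \<and> (\<forall>m\<in>M. \<forall>r\<in>R. \<forall>r'\<in>R. act (act m r) r' = act m (r * r'))
    \<and> (\<forall>m\<in>M. act m 1 = m)"

definition lmod :: "'r::ring_1 set \<Rightarrow> 'm set \<Rightarrow> ('m \<Rightarrow> 'm \<Rightarrow> 'm) \<Rightarrow> 'm \<Rightarrow> ('r \<Rightarrow> 'm \<Rightarrow> 'm) \<Rightarrow> bool" where
  "lmod R M p z act \<longleftrightarrow> ab_grp M p z
    \<and> (\<forall>m\<in>M. \<forall>r\<in>R. act r m \<in> M)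
    \<and> (\<forall>m\<in>M. \<forall>m'\<in>M. \<forall>r\<in>R. act r (p m m') = p (act r m) (act r m'))
    \<and> (\<forall>m\<in>M. \<forall>r\<in>R. \<forall>r'\<in>R. act (r + r') m = p (act r m) (act r' m))
    \<and> (\<forall>m\<in>M. \<forall>r\<in>R. \<forall>r'\<in>R. act r (act r' m) = act (r * r') m)
    \<and> (\<forall>m\<in>M. act 1 m = m)"

definition rmod_hom :: "'r::ring_1 set \<Rightarrow> 'm set \<Rightarrow> ('m \<Rightarrow> 'm \<Rightarrow> 'm) \<Rightarrow> ('m \<Rightarrow> 'r \<Rightarrow> 'm)
    \<Rightarrow> 'n set \<Rightarrow> ('n \<Rightarrow> 'n \<Rightarrow> 'n) \<Rightarrow> ('n \<Rightarrow> 'r \<Rightarrow> 'n) \<Rightarrow> ('m \<Rightarrow> 'n) \<Rightarrow> bool" where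
  "rmod_hom R M p act N q act' f \<longleftrightarrow> (\<forall>m\<in>M. f m \<in> N)
    \<and> (\<forall>m\<in>M. \<forall>m'\<in>M. f (p m m') = q (f m) (f m'))
    \<and> (\<forall>m\<in>M. \<forall>r\<in>R. f (act m r) = act' (f m) r)"

text \<open>{}_s H is flat as a left A-module: tensoring (over A) injective maps of right A-modules
with {}_s H preserves injectivity. Test modules are taken with carriers in the type 'a list
(large enough to contain every finitely generated right A-module up to isomorphism, in particular
all right ideals of A).\<close>
definition s_flat :: "('a::ring_1 \<Rightarrow> 'h::ring_1) \<Rightarrow> bool" where
  "s_flat s \<longleftrightarrow> (\<forall>(M1::'a list set) p1 z1 a1 (M2::'a list set) p2 z2 a2 f.
     rmod (UNIV::'a set) M1 p1 z1 a1 \<and> rmod (UNIV::'a set) M2 p2 z2 a2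
     \<and> rmod_hom UNIV M1 p1 a1 M2 p2 a2 f \<and> inj_on f M1 \<longrightarrow>
     (\<forall>X. Poly_Mapping.keys X \<subseteq> M1 \<times> (UNIV::'h set) \<longrightarrow>
        tmap f id X \<in> tens_rel p2 (+) a2 (\<lambda>a h. s a * h) M2 UNIV UNIV \<longrightarrow>
        X \<in> tens_rel p1 (+) a1 (\<lambda>a h. s a * h) M1 UNIV UNIV))"

text \<open>The inclusion B -> H is a pure morphism of right B-modules: for every left B-module M,
B (x)_B M -> H (x)_B M is injective. Test modules have carriers in the type 'h list
(large enough for all finitely presented left B-modules).\<close>
definition pure_incl :: "'h::ring_1 set \<Rightarrow> bool" where
  "pure_incl B \<longleftrightarrow> (\<forall>(M::'h list set) p z act. lmod B M p z act \<longrightarrow>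
     (\<forall>X. Poly_Mapping.keys X \<subseteq> B \<times> M \<longrightarrow>
        X \<in> tens_rel (+) p (\<lambda>h b. h * b) act UNIV M B \<longrightarrow>
        X \<in> tens_rel (+) p (\<lambda>h b. h * b) act B M B))"

definition subalgebra :: "'h::ring_1 set \<Rightarrow> bool" where
  "subalgebra B \<longleftrightarrow> 1 \<in> B \<and> (\<forall>x\<in>B. \<forall>y\<in>B. x + y \<in> B \<and> x * y \<in> B) \<and> (\<forall>x\<in>B. - x \<in> B)"

text \<open>B is a right H-comodule A^o-subring of H via t: a subalgebra containing t(A) with a coassociative,
counital, right A-linear coaction delta : B -> B (x)_A H such that (iota (x) H) delta = Delta iota.\<close>
definition comodule_subring ::
  "('a::ring_1 \<Rightarrow> 'h::ring_1) \<Rightarrow> ('a \<Rightarrow> 'h) \<Rightarrow> ('h \<Rightarrow> ('h \<times> 'h \<Rightarrow>\<^sub>0 int)) \<Rightarrow> ('h \<Rightarrow> 'a) \<Rightarrow> 'h set \<Rightarrow> bool" where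
  "comodule_subring s t \<Delta> \<epsilon> B \<longleftrightarrow> subalgebra B \<and> range t \<subseteq> B \<and>
    (\<exists>\<delta>. (\<forall>b\<in>B. Poly_Mapping.keys (\<delta> b) \<subseteq> B \<times> UNIV)
      \<and> (\<forall>b\<in>B. \<forall>b'\<in>B. \<delta> (b + b') - (\<delta> b + \<delta> b') \<in> tensA s t B)
      \<and> (\<forall>b\<in>B. \<forall>a. \<delta> (t a * b) - tmap id (\<lambda>h. t a * h) (\<delta> b) \<in> tensA s t B)
      \<and> (\<forall>b\<in>B. ev (\<lambda>(u, v). t (\<epsilon> v) * u) (\<delta> b) = b)
      \<and> (\<forall>b\<in>B. comul_left \<delta> (\<delta> b) - comul_right \<Delta> (\<delta> b) \<in> tens3_rel s t B)
      \<and> (\<forall>b\<in>B. \<delta> b - \<Delta> b \<in> tensA s t UNIV))"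

inductive_set left_ideal_gen :: "'h::ring_1 set \<Rightarrow> 'h set" for S where
  lig_zero: "0 \<in> left_ideal_gen S"
| lig_gen: "b \<in> S \<Longrightarrow> h * b \<in> left_ideal_gen S"
| lig_add: "x \<in> left_ideal_gen S \<Longrightarrow> y \<in> left_ideal_gen S \<Longrightarrow> x + y \<in> left_ideal_gen S"

definition Bplus :: "('h \<Rightarrow> 'a::zero) \<Rightarrow> 'h set \<Rightarrow> 'h set" where
  "Bplus \<epsilon> B = {b \<in> B. \<epsilon> b = 0}"

text \<open>Quotient H/I by a left ideal I as a set of cosets; right A-module via t.\<close>
definition coset :: "'h::ring_1 set \<Rightarrow> 'h \<Rightarrow> 'h set" where
  "coset I x = {x + i | i. i \<in> I}"

definition coset_add :: "'h::ring_1 set \<Rightarrow> 'h set \<Rightarrow> 'h set \<Rightarrow> 'h set" where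
  "coset_add I X Y = coset I ((SOME x. x \<in> X) + (SOME y. y \<in> Y))"

definition coset_act :: "('a \<Rightarrow> 'h::ring_1) \<Rightarrow> 'h set \<Rightarrow> 'h set \<Rightarrow> 'a \<Rightarrow> 'h set" where
  "coset_act t I X a = coset I (t a * (SOME x. x \<in> X))"

text \<open>H^{co H/I} = {x | sum pi(x_1) (x) x_2 = pi(1) (x) x in (H/I) (x)_A H}.\<close>
definition coinv :: "('a \<Rightarrow> 'h::ring_1) \<Rightarrow> ('a \<Rightarrow> 'h) \<Rightarrow> ('h \<Rightarrow> ('h \<times> 'h \<Rightarrow>\<^sub>0 int)) \<Rightarrow> 'h set \<Rightarrow> 'h set" where
  "coinv s t \<Delta> I = {x. tmap (coset I) id (\<Delta> x) - Poly_Mapping.single (coset I 1, x) 1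
      \<in> tens_rel (coset_add I) (+) (coset_act t I) (\<lambda>a y. s a * y) (range (coset I)) UNIV UNIV}"

end

theory Submission
  imports Defs
begin

lemma frag_cmul_expand:
  "frag_cmul c Y = (\<Sum>q\<in>Poly_Mapping.keys Y. Poly_Mapping.single q (c * Poly_Mapping.lookup Y q))"
  by (rule poly_mapping_eqI) (auto simp: lookup_sum lookup_single when_def in_keys_iff)

lemma lift_eq: "lift F X = frag_extend F X"
  unfolding lift_def frag_extend_def by (simp add: frag_cmul_expand)

lemma tmap_eq: "tmap f g X = frag_extend (\<lambda>(x,y). frag_of (f x, g y)) X"
  unfolding tmap_def lift_eq ..

lemma fe_comp: "frag_extend G (frag_extend F X) = frag_extend (\<lambda>p. frag_extend G (F p)) X"
  by (induction X rule: frag_induction[OF subset_UNIV]) (auto simp: frag_extend_diff)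

lemma fe_fun_add: "frag_extend (\<lambda>p. F p + G p) X = frag_extend F X + frag_extend G X"
  by (induction X rule: frag_induction[OF subset_UNIV]) (auto simp: frag_extend_diff algebra_simps)

lemma fe_fun_diff: "frag_extend (\<lambda>p. F p - G p) X = frag_extend F X - frag_extend G X"
  by (induction X rule: frag_induction[OF subset_UNIV]) (auto simp: frag_extend_diff algebra_simps)

lemma fe_id: "frag_extend frag_of X = X"
  using frag_expansion[of X] by simp

lemma ev_sum_superset:
  assumes "finite S" "Poly_Mapping.keys X \<subseteq> S"
  shows "ev f X = (\<Sum>p\<in>S. of_int (Poly_Mapping.lookup X p) * f p)"
  unfolding ev_def
  by (rule sum.mono_neutral_left) (use assms in \<open>auto simp: in_keys_iff\<close>)

lemma ev_add: "ev f (X + Y) = ev f X + ev f Y"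
proof -
  let ?S = "Poly_Mapping.keys X \<union> Poly_Mapping.keys Y"
  have "Poly_Mapping.keys (X + Y) \<subseteq> ?S" by (rule keys_add)
  then have "ev f (X+Y) = (\<Sum>p\<in>?S. of_int (Poly_Mapping.lookup (X+Y) p) * f p)"
    by (intro ev_sum_superset) auto
  also have "\<dots> = (\<Sum>p\<in>?S. of_int (Poly_Mapping.lookup X p) * f p) + (\<Sum>p\<in>?S. of_int (Poly_Mapping.lookup Y p) * f p)"
    by (simp add: lookup_add distrib_right sum.distrib)
  also have "\<dots> = ev f X + ev f Y"
    by (subst (1 2) ev_sum_superset[symmetric]) auto
  finally show ?thesis .
qed

lemma ev_zero[simp]: "ev f 0 = 0"
  by (simp add: ev_def)

lemma ev_minus: "ev f (- X) = - ev f X"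
  using ev_add[of f "-X" X] by (simp add: eq_neg_iff_add_eq_0)

lemma ev_diff: "ev f (X - Y) = ev f X - ev f Y"
  using ev_add[of f X "-Y"] ev_minus[of f Y] by simp

lemma ev_frag_of[simp]: "ev f (frag_of p) = f p"
  by (simp add: ev_def)

lemma ev_fe: "ev f (frag_extend G X) = ev (\<lambda>p. ev f (G p)) X"
  by (induction X rule: frag_induction[OF subset_UNIV]) (auto simp: frag_extend_diff ev_diff)

lemma ev_mult_right: "ev (\<lambda>p. f p * c) X = ev f X * c"
  by (induction X rule: frag_induction[OF subset_UNIV]) (auto simp: ev_diff algebra_simps)

lemma ev_cong: "(\<And>p. f p = g p) \<Longrightarrow> ev f X = ev g X"
  by (metis ext)

definition subgrp :: "'x::ab_group_add set \<Rightarrow> bool" where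
  "subgrp R \<longleftrightarrow> 0 \<in> R \<and> (\<forall>x\<in>R. \<forall>y\<in>R. x + y \<in> R) \<and> (\<forall>x\<in>R. - x \<in> R)"

lemma subgrp_0: "subgrp R \<Longrightarrow> 0 \<in> R" by (simp add: subgrp_def)
lemma subgrp_add: "subgrp R \<Longrightarrow> x \<in> R \<Longrightarrow> y \<in> R \<Longrightarrow> x + y \<in> R" by (simp add: subgrp_def)
lemma subgrp_neg: "subgrp R \<Longrightarrow> x \<in> R \<Longrightarrow> - x \<in> R" by (simp add: subgrp_def)
lemma subgrp_diff: "subgrp R \<Longrightarrow> x \<in> R \<Longrightarrow> y \<in> R \<Longrightarrow> x - y \<in> R"
  using subgrp_add[of R x "-y"] subgrp_neg[of R y] by simp
lemma subgrp_neg_iff: "subgrp R \<Longrightarrow> - x \<in> R \<longleftrightarrow> x \<in> R"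
  using subgrp_neg[of R x] subgrp_neg[of R "-x"] by auto

lemma cg_trans: "subgrp R \<Longrightarrow> a - b \<in> R \<Longrightarrow> b - c \<in> R \<Longrightarrow> a - c \<in> R"
  using subgrp_add[of R "a-b" "b-c"] by simp
lemma cg_sym: "subgrp R \<Longrightarrow> a - b \<in> R \<Longrightarrow> b - a \<in> R"
  using subgrp_neg[of R "a-b"] by simp
lemma cg_add: "subgrp R \<Longrightarrow> a - b \<in> R \<Longrightarrow> c - d \<in> R \<Longrightarrow> (a + c) - (b + d) \<in> R"
  using subgrp_add[of R "a-b" "c-d"] by (simp add: algebra_simps)
lemma cg_diff: "subgrp R \<Longrightarrow> a - b \<in> R \<Longrightarrow> c - d \<in> R \<Longrightarrow> (a - c) - (b - d) \<in> R"
  using subgrp_diff[of R "a-b" "c-d"] by (simp add: algebra_simps)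

lemma tens_rel_subgrp: "subgrp (tens_rel pM pN aM aN M N R)"
  by (auto simp: subgrp_def intro: tens_rel.intros)

lemma fe_cong:
  assumes "subgrp R" "Poly_Mapping.keys X \<subseteq> S" "\<And>p. p \<in> S \<Longrightarrow> F p - G p \<in> R"
  shows "frag_extend F X - frag_extend G X \<in> R"
  using assms(2)
proof (induction X rule: frag_induction)
  case zero then show ?case using subgrp_0[OF assms(1)] by simp
next
  case (one x) then show ?case using assms(3) by simp
next
  case (diff a b)
  then show ?case using cg_diff[OF assms(1) diff(1) diff(2)] by (simp add: frag_extend_diff)
qed

lemma fe_in:
  assumes "subgrp R" "Poly_Mapping.keys X \<subseteq> S" "\<And>p. p \<in> S \<Longrightarrow> F p \<in> R"
  shows "frag_extend F X \<in> R"
  using fe_cong[OF assms(1,2), of F "\<lambda>_. 0"] assms(3) by (simp add: frag_extend_eq_0)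

lemma fe_lin:
  assumes "subgrp R" "\<And>a b. L (a + b) - L a - L b \<in> R"
  shows "frag_extend (\<lambda>q. L (f q)) X - L (ev f X) \<in> R"
proof (induction X rule: frag_induction[OF subset_UNIV])
  case 1
  have "L (0 + 0) - L 0 - L 0 \<in> R" by (rule assms(2))
  then have "- L 0 \<in> R" by simp
  then show ?case using subgrp_neg_iff[OF assms(1)] by simp
next
  case (2 x) then show ?case using subgrp_0[OF assms(1)] by simp
next
  case (3 a b)
  have e: "L (ev f a) - (L (ev f a - ev f b) + L (ev f b)) \<in> R"
    using assms(2)[of "ev f a - ev f b" "ev f b"] by (simp add: algebra_simps)
  have "(frag_extend (\<lambda>q. L (f q)) a - frag_extend (\<lambda>q. L (f q)) b) - (L (ev f a) - L (ev f b)) \<in> R"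
    using cg_diff[OF assms(1) 3(1) 3(2)] .
  note h0 = this
  then have "(frag_extend (\<lambda>q. L (f q)) a - frag_extend (\<lambda>q. L (f q)) b) - L (ev f a - ev f b) \<in> R"
  proof -
    note h = subgrp_add[OF assms(1) h0 e]
    have eqn: "frag_extend (\<lambda>q. L (f q)) a - frag_extend (\<lambda>q. L (f q)) b - (L (ev f a) - L (ev f b)) +
      (L (ev f a) - (L (ev f a - ev f b) + L (ev f b))) = 
      (frag_extend (\<lambda>q. L (f q)) a - frag_extend (\<lambda>q. L (f q)) b) - L (ev f a - ev f b)"
      by (simp add: algebra_simps)
    show ?thesis using h unfolding eqn .
  qed
  then show ?case by (simp add: frag_extend_diff ev_diff)
qed

lemma rel_map:
  assumes "X \<in> tens_rel pM pN aM aN M N R" and "subgrp R'"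
    and add: "\<And>x y. \<phi> (x + y) = \<phi> x + \<phi> y"
    and g1: "\<And>m m' n. m \<in> M \<Longrightarrow> m' \<in> M \<Longrightarrow> n \<in> N \<Longrightarrow>
       \<phi> (frag_of (pM m m', n) - frag_of (m, n) - frag_of (m', n)) \<in> R'"
    and g2: "\<And>m n n'. m \<in> M \<Longrightarrow> n \<in> N \<Longrightarrow> n' \<in> N \<Longrightarrow>
       \<phi> (frag_of (m, pN n n') - frag_of (m, n) - frag_of (m, n')) \<in> R'"
    and g3: "\<And>m r n. m \<in> M \<Longrightarrow> r \<in> R \<Longrightarrow> n \<in> N \<Longrightarrow>
       \<phi> (frag_of (aM m r, n) - frag_of (m, aN r n)) \<in> R'"
  shows "\<phi> X \<in> R'"
proof -
  have z: "\<phi> 0 = 0" using add[of 0 0] by simp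
  have n: "\<phi> (- x) = - \<phi> x" for x using add[of "-x" x] z by (simp add: eq_neg_iff_add_eq_0)
  show ?thesis using assms(1)
  proof (induction rule: tens_rel.induct)
    case tr_zero then show ?case using z subgrp_0[OF assms(2)] by simp
  next
    case (tr_add x y) then show ?case using add subgrp_add[OF assms(2)] by simp
  next
    case (tr_neg x) then show ?case using n subgrp_neg[OF assms(2)] by simp
  qed (auto intro: g1 g2 g3)
qed


lemma tmult_eq: "tmult X Y = frag_extend (\<lambda>(x1,x2). frag_extend (\<lambda>(y1,y2). frag_of (x1*y1, x2*y2)) Y) X"
  unfolding tmult_def lift_eq ..

lemma tmult_add_right: "tmult X (Y1 + Y2) = tmult X Y1 + tmult X Y2"
  unfolding tmult_eq by (simp add: frag_extend_add case_prod_unfold fe_fun_add)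

lemma tmult_diff_right: "tmult X (Y1 - Y2) = tmult X Y1 - tmult X Y2"
  unfolding tmult_eq by (simp add: frag_extend_diff case_prod_unfold fe_fun_diff)

lemma tmult_frag_of: "tmult X (frag_of (y1,y2)) = tmap (\<lambda>u. u*y1) (\<lambda>v. v*y2) X"
  unfolding tmult_eq tmap_eq by (simp add: case_prod_unfold)

lemma tmap_diff: "tmap f g (X - Y) = tmap f g X - tmap f g Y"
  unfolding tmap_eq by (simp add: frag_extend_diff)

lemma tmap_add: "tmap f g (X + Y) = tmap f g X + tmap f g Y"
  unfolding tmap_eq by (simp add: frag_extend_add)

lemma tmap_comp: "tmap f g (tmap f' g' X) = tmap (\<lambda>x. f (f' x)) (\<lambda>y. g (g' y)) X"
  unfolding tmap_eq by (simp add: fe_comp case_prod_unfold)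

lemma tmap_fe: "tmap f g (frag_extend F X) = frag_extend (\<lambda>p. tmap f g (F p)) X"
  unfolding tmap_eq by (simp add: fe_comp)

lemma tmap_id_id: "tmap (\<lambda>x. x) (\<lambda>y. y) X = X"
  unfolding tmap_eq by (simp add: fe_id case_prod_unfold)

lemma tmap_frag_of[simp]: "tmap f g (frag_of (x,y)) = frag_of (f x, g y)"
  unfolding tmap_eq by simp

locale HA =
  fixes \<iota> :: "'k::field \<Rightarrow> 'a::ring_1" and \<kappa> :: "'k \<Rightarrow> 'h::ring_1"
    and s :: "'a \<Rightarrow> 'h" and t :: "'a \<Rightarrow> 'h"
    and \<Delta> :: "'h \<Rightarrow> ('h \<times> 'h \<Rightarrow>\<^sub>0 int)" and \<epsilon> :: "'h \<Rightarrow> 'a"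
    and B :: "'h set"
  assumes hopf: "left_hopf_algebroid \<iota> \<kappa> s t \<Delta> \<epsilon>"
    and cs: "comodule_subring s t \<Delta> \<epsilon> B"
    and pure: "pure_incl B"
    and gam: "gamma_in s t \<Delta> B"
begin

abbreviation "TA \<equiv> tens_rel (+) (+) (\<lambda>x a. t a * x) (\<lambda>a y. s a * y) (UNIV::'h set) (UNIV::'h set) (UNIV::'a set)"

lemma TA_eq: "tensA s t UNIV = TA" by (simp add: tensA_def)

lemma bialg: "left_bialgebroid \<iota> \<kappa> s t \<Delta> \<epsilon>" using hopf by (simp add: left_hopf_algebroid_def)

lemma s_add: "s (a + b) = s a + s b" using bialg by (simp add: left_bialgebroid_def)
lemma s_mult: "s (a * b) = s a * s b" using bialg by (simp add: left_bialgebroid_def)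
lemma s_one: "s 1 = 1" using bialg by (simp add: left_bialgebroid_def)
lemma s_zero: "s 0 = 0" using s_add[of 0 0] by simp
lemma t_add: "t (a + b) = t a + t b" using bialg by (simp add: left_bialgebroid_def)
lemma t_mult: "t (a * b) = t b * t a" using bialg by (simp add: left_bialgebroid_def)
lemma t_one: "t 1 = 1" using bialg by (simp add: left_bialgebroid_def)
lemma eps_add: "\<epsilon> (x + y) = \<epsilon> x + \<epsilon> y" using bialg by (simp add: left_bialgebroid_def)
lemma eps_zero: "\<epsilon> 0 = 0" using eps_add[of 0 0] by simp
lemma eps_minus: "\<epsilon> (- x) = - \<epsilon> x" using eps_add[of "-x" x] eps_zero by (simp add: eq_neg_iff_add_eq_0)
lemma eps_diff: "\<epsilon> (x - y) = \<epsilon> x - \<epsilon> y" using eps_add[of x "-y"] eps_minus[of y] by simp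
lemma eps_st: "\<epsilon> (s a * t b * x) = a * \<epsilon> x * b" using bialg unfolding left_bialgebroid_def by blast
lemma eps_one: "\<epsilon> 1 = 1" using bialg by (simp add: left_bialgebroid_def)
lemma eps_tx: "\<epsilon> (t a * x) = \<epsilon> x * a" using eps_st[of 1 a x] by (simp add: s_one)
lemma eps_t: "\<epsilon> (t a) = a" using eps_tx[of a 1] by (simp add: eps_one)
lemma Delta_one: "\<Delta> 1 - frag_of (1,1) \<in> TA" using bialg by (simp add: left_bialgebroid_def TA_eq)
lemma Delta_mult: "\<Delta> (x*y) - tmult (\<Delta> x) (\<Delta> y) \<in> TA" using bialg by (simp add: left_bialgebroid_def TA_eq)
lemma takeuchi: "tmap (\<lambda>u. u * t a) id (\<Delta> x) - tmap id (\<lambda>v. v * s a) (\<Delta> x) \<in> TA"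
  using bialg by (simp add: left_bialgebroid_def TA_eq)
lemma counitL: "ev (\<lambda>(u,v). s (\<epsilon> u) * v) (\<Delta> x) = x" using bialg by (simp add: left_bialgebroid_def)

abbreviation "TAo \<equiv> tensAo t"

definition beta where "beta X = frag_extend (\<lambda>(x,y). tmap (\<lambda>u. u) (\<lambda>v. v*y) (\<Delta> x)) X"

lemma beta_gal: "galois_beta \<Delta> X = beta X"
  unfolding galois_beta_def beta_def lift_eq by (simp add: id_def)

lemma beta_inj: "beta X - beta Y \<in> TA \<Longrightarrow> X - Y \<in> TAo"
  using hopf by (simp add: left_hopf_algebroid_def TA_eq beta_gal)
lemma beta_surj: "\<exists>X. beta X - Z \<in> TA"
  using hopf by (simp add: left_hopf_algebroid_def TA_eq beta_gal)

lemma beta_diff: "beta (X - Y) = beta X - beta Y" by (simp add: beta_def frag_extend_diff)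
lemma beta_zero: "beta 0 = 0" by (simp add: beta_def)
lemma beta_add: "beta (X + Y) = beta X + beta Y" by (simp add: beta_def frag_extend_add)
lemma beta_frag_of: "beta (frag_of (x,y)) = tmap (\<lambda>u. u) (\<lambda>v. v*y) (\<Delta> x)" by (simp add: beta_def)
lemma beta_fe: "beta (frag_extend F X) = frag_extend (\<lambda>p. beta (F p)) X" by (simp add: beta_def fe_comp)

lemma TA_subgrp: "subgrp TA" by (rule tens_rel_subgrp)

lemma tmap_TA: "X \<in> TA \<Longrightarrow> tmap (\<lambda>u. u*m) (\<lambda>v. v*n) X \<in> TA"
proof (erule rel_map[OF _ TA_subgrp])
  show "tmap (\<lambda>u. u*m) (\<lambda>v. v*n) (x + y) = tmap (\<lambda>u. u*m) (\<lambda>v. v*n) x + tmap (\<lambda>u. u*m) (\<lambda>v. v*n) y" for x y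
    by (rule tmap_add)
  show "tmap (\<lambda>u. u*m) (\<lambda>v. v*n) (frag_of (a + a', b) - frag_of (a, b) - frag_of (a', b)) \<in> TA" for a a' b
    by (simp add: tmap_diff distrib_right tens_rel.tr_addl)
  show "tmap (\<lambda>u. u*m) (\<lambda>v. v*n) (frag_of (a, b + b') - frag_of (a, b) - frag_of (a, b')) \<in> TA" for a b b'
    by (simp add: tmap_diff distrib_right tens_rel.tr_addr)
  show "tmap (\<lambda>u. u*m) (\<lambda>v. v*n) (frag_of (t r * a, b) - frag_of (a, s r * b)) \<in> TA" for a r b
    using tens_rel.tr_bal[where m="a*m" and r=r and n="b*n" and M=UNIV and N=UNIV and R=UNIV and aM="\<lambda>x a. t a * x" and aN="\<lambda>a y. s a * y" and pM="(+)" and pN="(+)"]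
    by (simp add: tmap_diff mult.assoc)
qed

lemma tmult_TA:
  assumes tak: "\<And>a. tmap (\<lambda>u. u * t a) (\<lambda>v. v) X - tmap (\<lambda>u. u) (\<lambda>v. v * s a) X \<in> TA"
    and "Y \<in> TA"
  shows "tmult X Y \<in> TA"
  using assms(2)
proof (rule rel_map[OF _ TA_subgrp])
  show "tmult X (x + y) = tmult X x + tmult X y" for x y by (rule tmult_add_right)
  show "tmult X (frag_of (a + a', b) - frag_of (a, b) - frag_of (a', b)) \<in> TA" for a a' b
  proof -
    have "tmult X (frag_of (a + a', b) - frag_of (a, b) - frag_of (a', b)) =
      frag_extend (\<lambda>(x1,x2). frag_of (x1*a + x1*a', x2*b) - frag_of (x1*a, x2*b) - frag_of (x1*a', x2*b)) X"
      by (simp add: tmult_diff_right tmult_frag_of tmap_eq fe_fun_diff case_prod_unfold distrib_left)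
    also have "\<dots> \<in> TA"
      by (rule fe_in[OF TA_subgrp subset_UNIV]) (auto simp: tens_rel.tr_addl case_prod_unfold)
    finally show ?thesis .
  qed
  show "tmult X (frag_of (a, b + b') - frag_of (a, b) - frag_of (a, b')) \<in> TA" for a b b'
  proof -
    have "tmult X (frag_of (a, b + b') - frag_of (a, b) - frag_of (a, b')) =
      frag_extend (\<lambda>(x1,x2). frag_of (x1*a, x2*b + x2*b') - frag_of (x1*a, x2*b) - frag_of (x1*a, x2*b')) X"
      by (simp add: tmult_diff_right tmult_frag_of tmap_eq fe_fun_diff case_prod_unfold distrib_left)
    also have "\<dots> \<in> TA"
      by (rule fe_in[OF TA_subgrp subset_UNIV]) (auto simp: tens_rel.tr_addr case_prod_unfold)
    finally show ?thesis .
  qed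
  show "tmult X (frag_of (t r * a, b) - frag_of (a, s r * b)) \<in> TA" for a r b
  proof -
    have "tmult X (frag_of (t r * a, b) - frag_of (a, s r * b)) =
      tmap (\<lambda>u. u*a) (\<lambda>v. v*b) (tmap (\<lambda>u. u * t r) (\<lambda>v. v) X - tmap (\<lambda>u. u) (\<lambda>v. v * s r) X)"
      by (simp add: tmult_diff_right tmult_frag_of tmap_diff tmap_comp mult.assoc)
    also have "\<dots> \<in> TA" by (rule tmap_TA[OF tak])
    finally show ?thesis .
  qed
qed

lemma takeuchi': "tmap (\<lambda>u. u * t a) (\<lambda>v. v) (\<Delta> x) - tmap (\<lambda>u. u) (\<lambda>v. v * s a) (\<Delta> x) \<in> TA"
  using takeuchi[of a x] by (simp add: id_def)

abbreviation "evL \<equiv> ev (\<lambda>(u,v). s (\<epsilon> u) * v)"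

lemma evL_TA: "X \<in> TA \<Longrightarrow> evL X = 0"
proof -
  assume X: "X \<in> TA"
  have "evL X \<in> {0}"
    using X
  proof (rule rel_map[OF _ _ ev_add])
    show "subgrp {0::'h}" by (simp add: subgrp_def)
  qed (auto simp: ev_diff eps_add s_add distrib_left distrib_right eps_tx s_mult mult.assoc)
  then show ?thesis by simp
qed

lemma evL_beta: "evL (beta X) = ev (\<lambda>(u,v). u * v) X"
proof (induction X rule: frag_induction[OF subset_UNIV])
  case (2 p)
  obtain u v where p: "p = (u,v)" by force
  have "evL (beta (frag_of p)) = ev (\<lambda>q. (case q of (x, y) \<Rightarrow> s (\<epsilon> x) * y) * v) (\<Delta> u)"
    by (simp add: p beta_frag_of tmap_eq ev_fe case_prod_unfold mult.assoc)
  also have "\<dots> = u * v" by (simp add: ev_mult_right counitL)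
  finally show ?case by (simp add: p)
qed (auto simp: beta_diff ev_diff beta_zero)

lemma subalg: "subalgebra B" using cs by (simp add: comodule_subring_def)
lemma B_one: "1 \<in> B" using subalg by (simp add: subalgebra_def)
lemma B_add: "x \<in> B \<Longrightarrow> y \<in> B \<Longrightarrow> x + y \<in> B" using subalg by (simp add: subalgebra_def)
lemma B_mult: "x \<in> B \<Longrightarrow> y \<in> B \<Longrightarrow> x * y \<in> B" using subalg by (simp add: subalgebra_def)
lemma B_neg: "x \<in> B \<Longrightarrow> - x \<in> B" using subalg by (simp add: subalgebra_def)
lemma B_zero: "0 \<in> B" using B_add[OF B_one B_neg[OF B_one]] by simp
lemma B_diff: "x \<in> B \<Longrightarrow> y \<in> B \<Longrightarrow> x - y \<in> B" using B_add[of x "-y"] B_neg[of y] by simp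
lemma B_t: "t a \<in> B" using cs by (auto simp: comodule_subring_def)
lemma B_subgrp: "subgrp B" by (simp add: subgrp_def B_zero B_add B_neg)

end

lemma coset_rep:
  assumes "subgrp I" shows "(SOME r. r \<in> coset I h) - h \<in> I"
proof -
  have "h + 0 \<in> coset I h" using subgrp_0[OF assms] unfolding coset_def by blast
  then have "(SOME r. r \<in> coset I h) \<in> coset I h" by (rule someI)
  then show ?thesis unfolding coset_def by auto
qed

lemma coset_eq:
  assumes "subgrp I" "a - b \<in> I" shows "coset I a = coset I b"
proof -
  have 1: "a + i = b + ((a - b) + i)" for i by simp
  have 2: "b + i = a + (i - (a - b))" for i by simp
  show ?thesis unfolding coset_def
    using subgrp_add[OF assms(1) assms(2)] subgrp_diff[OF assms(1) _ assms(2)]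
    by (auto, metis 1, metis 2)
qed

lemma coset_eq_iff:
  assumes "subgrp I" shows "coset I a = coset I b \<longleftrightarrow> a - b \<in> I"
proof
  assume "coset I a = coset I b"
  then have "(SOME r. r \<in> coset I a) = (SOME r. r \<in> coset I b)" by simp
  with coset_rep[OF assms, of a] coset_rep[OF assms, of b]
  have "(SOME r. r \<in> coset I b) - a \<in> I" "(SOME r. r \<in> coset I b) - b \<in> I" by auto
  from subgrp_diff[OF assms this(2) this(1)] show "a - b \<in> I" by simp
qed (rule coset_eq[OF assms])

context HA begin

definition repB where "repB h = (SOME r. r \<in> coset B h)"
definition cl :: "'h \<Rightarrow> 'h list" where "cl h = [repB h]"
definition Mc where "Mc = range cl"
definition pM where "pM m m' = cl (hd m + hd m')"
definition actM where "actM b m = cl (b * hd m)"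

lemma rep_B: "repB h - h \<in> B" unfolding repB_def by (rule coset_rep[OF B_subgrp])
lemma cl_eq_iff: "cl a = cl b \<longleftrightarrow> a - b \<in> B"
proof
  assume "cl a = cl b"
  then have "repB a = repB b" by (simp add: cl_def)
  then show "a - b \<in> B" using B_diff[OF rep_B[of b] rep_B[of a]] by simp
next
  assume "a - b \<in> B"
  then show "cl a = cl b" using coset_eq[OF B_subgrp] by (simp add: cl_def repB_def)
qed
lemma hd_cl[simp]: "hd (cl h) = repB h" by (simp add: cl_def)
lemma cl_rep[simp]: "cl (repB h) = cl h" by (simp add: cl_eq_iff rep_B)

lemma lmodM: "lmod B Mc pM (cl 0) actM"
  unfolding lmod_def ab_grp_def Mc_def pM_def actM_def
proof (intro conjI ballI)
  fix x y w assume "x \<in> range cl" "y \<in> range cl" "w \<in> range cl"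
  show "cl (hd (cl (hd x + hd y)) + hd w) = cl (hd x + hd (cl (hd y + hd w)))"
    using B_diff[OF rep_B[of "hd x + hd y"] rep_B[of "hd y + hd w"]]
    by (simp add: cl_eq_iff algebra_simps)
next
  fix x y show "cl (hd x + hd y) = cl (hd y + hd x)" by (simp add: add.commute)
next
  fix x assume "x \<in> range cl"
  then obtain h where x: "x = cl h" by auto
  show "cl (hd (cl 0) + hd x) = x"
    using B_add[OF rep_B[of 0] rep_B[of h]] by (simp add: x cl_eq_iff algebra_simps)
next
  fix x assume "x \<in> range cl"
  show "\<exists>y\<in>range cl. cl (hd x + hd y) = cl 0"
    by (rule bexI[of _ "cl (- hd x)"]) (use rep_B[of "- hd x"] in \<open>auto simp: cl_eq_iff algebra_simps\<close>)
next
  fix m m' r assume r: "r \<in> B"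
  show "cl (r * hd (cl (hd m + hd m'))) = cl (hd (cl (r * hd m)) + hd (cl (r * hd m')))"
    using B_diff[OF B_mult[OF r rep_B[of "hd m + hd m'"]] B_add[OF rep_B[of "r * hd m"] rep_B[of "r * hd m'"]]]
    by (simp add: cl_eq_iff algebra_simps)
next
  fix m r r' assume r: "r \<in> B" "r' \<in> B"
  show "cl ((r + r') * hd m) = cl (hd (cl (r * hd m)) + hd (cl (r' * hd m)))"
    using B_neg[OF B_add[OF rep_B[of "r * hd m"] rep_B[of "r' * hd m"]]]
    by (simp add: cl_eq_iff algebra_simps)
next
  fix m r r' assume r: "r \<in> B" "r' \<in> B"
  show "cl (r * hd (cl (r' * hd m))) = cl (r * r' * hd m)"
    using B_mult[OF r(1) rep_B[of "r' * hd m"]]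
    by (simp add: cl_eq_iff algebra_simps)
next
  fix m assume "m \<in> range cl"
  then obtain h where m: "m = cl h" by auto
  show "cl (1 * hd m) = m" by (simp add: m)
qed auto

abbreviation "relH \<equiv> tens_rel (+) pM (\<lambda>h b. h * b) actM UNIV Mc B"
abbreviation "relBB \<equiv> tens_rel (+) pM (\<lambda>h b. h * b) actM B Mc B"

lemma relH_subgrp: "subgrp relH" by (rule tens_rel_subgrp)

lemma relBB_ev: "X \<in> relBB \<Longrightarrow> ev (\<lambda>(b,m). b * hd m) X \<in> B"
proof (erule rel_map[OF _ B_subgrp ev_add])
  fix m m' n assume "m \<in> B" "m' \<in> B" "n \<in> Mc"
  show "ev (\<lambda>(b,m). b * hd m) (frag_of (m + m', n) - frag_of (m, n) - frag_of (m', n)) \<in> B"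
    by (simp add: ev_diff ev_add algebra_simps B_zero)
next
  fix m n n' assume m: "m \<in> B" "n \<in> Mc" "n' \<in> Mc"
  show "ev (\<lambda>(b,m). b * hd m) (frag_of (m, pM n n') - frag_of (m, n) - frag_of (m, n')) \<in> B"
    using B_mult[OF m(1) rep_B[of "hd n + hd n'"]]
    by (simp add: ev_diff ev_add pM_def algebra_simps)
next
  fix m r n assume m: "m \<in> B" "r \<in> B" "n \<in> Mc"
  show "ev (\<lambda>(b,m). b * hd m) (frag_of (m * r, n) - frag_of (m, actM r n)) \<in> B"
    using B_neg[OF B_mult[OF m(1) rep_B[of "r * hd n"]]]
    by (simp add: ev_diff ev_add actM_def algebra_simps)
qed

lemma purity_step:
  assumes "frag_of (1, cl x) \<in> relH" shows "x \<in> B"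
proof -
  have "frag_of (1, cl x) \<in> relBB"
    using pure lmodM assms B_one unfolding pure_incl_def Mc_def by auto
  from relBB_ev[OF this] have "repB x \<in> B" by simp
  from B_diff[OF this rep_B[of x]] show ?thesis by simp
qed

lemma pM_cl: "pM (cl a) (cl b) = cl (a + b)"
  using B_add[OF rep_B[of a] rep_B[of b]] by (simp add: pM_def cl_eq_iff algebra_simps)
lemma actM_cl: "r \<in> B \<Longrightarrow> actM r (cl a) = cl (r * a)"
  using B_mult[OF _ rep_B[of a], of r] by (simp add: actM_def cl_eq_iff algebra_simps)
lemma cl_in[simp]: "cl a \<in> Mc" by (simp add: Mc_def)

lemma zero_in: "frag_of (u, cl 0) \<in> relH"
proof -
  have "frag_of (u, pM (cl 0) (cl 0)) - frag_of (u, cl 0) - frag_of (u, cl 0) \<in> relH"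
    by (rule tens_rel.tr_addr) auto
  then have "- frag_of (u, cl 0) \<in> relH" by (simp add: pM_cl)
  then show ?thesis using subgrp_neg_iff[OF relH_subgrp] by blast
qed

lemma L_lin: "frag_of (u, cl (a + b)) - frag_of (u, cl a) - frag_of (u, cl b) \<in> relH"
  using tens_rel.tr_addr[where pM="(+)" and pN=pM and aM="\<lambda>h b. h*b" and aN=actM and M=UNIV and N=Mc and R=B and m=u and n="cl a" and n'="cl b"] by (simp add: pM_cl)

definition rho :: "('h \<times> 'h \<Rightarrow>\<^sub>0 int) \<Rightarrow> ('h \<times> 'h list \<Rightarrow>\<^sub>0 int)" where
  "rho X = tmap (\<lambda>u. u) cl X"

lemma rho_diff: "rho (X - Y) = rho X - rho Y" by (simp add: rho_def tmap_diff)
lemma rho_add: "rho (X + Y) = rho X + rho Y" by (simp add: rho_def tmap_add)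
lemma rho_frag_of[simp]: "rho (frag_of (u,v)) = frag_of (u, cl v)" by (simp add: rho_def)
lemma rho_fe: "rho (frag_extend F X) = frag_extend (\<lambda>p. rho (F p)) X" by (simp add: rho_def tmap_fe)

lemma rho_TAo: "X \<in> TAo \<Longrightarrow> rho X \<in> relH"
  unfolding tensAo_def
proof (erule rel_map[OF _ relH_subgrp])
  show "rho (x + y) = rho x + rho y" for x y by (rule rho_add)
  show "rho (frag_of (m + m', n) - frag_of (m, n) - frag_of (m', n)) \<in> relH" for m m' n
    by (simp add: rho_diff tens_rel.tr_addl)
  show "rho (frag_of (m, n + n') - frag_of (m, n) - frag_of (m, n')) \<in> relH" for m n n'
    using L_lin by (simp add: rho_diff)
  show "rho (frag_of (m * t r, n) - frag_of (m, t r * n)) \<in> relH" for m r n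
    using tens_rel.tr_bal[where pM="(+)" and pN=pM and aM="\<lambda>h b. h*b" and aN=actM and M=UNIV and N=Mc and R=B and m=m and r="t r" and n="cl n"] B_t[of r]
    by (simp add: rho_diff actM_cl)
qed

definition gammaZ where "gammaZ Z = (SOME X. beta X - Z \<in> TA)"
lemma gammaZ: "beta (gammaZ Z) - Z \<in> TA"
  unfolding gammaZ_def using beta_surj[of Z] by (rule someI_ex)

definition psi where "psi p = rho (gammaZ (frag_of p))"
definition Psi where "Psi Z = frag_extend psi Z"

lemma Psi_frag_of[simp]: "Psi (frag_of p) = psi p" by (simp add: Psi_def)

lemma beta_expand: "beta X = frag_extend (\<lambda>p. beta (frag_of p)) X"
  unfolding beta_def by simp

lemma KEY:
  assumes "beta X - Z \<in> TA" shows "rho X - Psi Z \<in> relH"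
proof -
  define Y where "Y = frag_extend (\<lambda>p. gammaZ (frag_of p)) Z"
  have "beta Y - Z \<in> TA"
    unfolding Y_def beta_fe using fe_cong[OF TA_subgrp subset_UNIV, of "\<lambda>p. beta (gammaZ (frag_of p))" frag_of Z] gammaZ
    by (simp add: fe_id)
  with assms have "beta X - beta Y \<in> TA"
    using subgrp_diff[OF TA_subgrp] by fastforce
  then have "X - Y \<in> TAo" by (rule beta_inj)
  then have "rho (X - Y) \<in> relH" by (rule rho_TAo)
  moreover have "rho Y = Psi Z" unfolding Y_def rho_fe Psi_def psi_def ..
  ultimately show ?thesis by (simp add: rho_diff)
qed

lemma psi_add1: "psi (h + h', y) - psi (h, y) - psi (h', y) \<in> relH"
proof -
  let ?X = "gammaZ (frag_of (h, y)) + gammaZ (frag_of (h', y))"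
  have "beta ?X - frag_of (h + h', y) =
    (beta (gammaZ (frag_of (h, y))) - frag_of (h, y)) + (beta (gammaZ (frag_of (h', y))) - frag_of (h', y))
     - (frag_of (h + h', y) - frag_of (h, y) - frag_of (h', y))"
    by (simp add: beta_add algebra_simps)
  also have "\<dots> \<in> TA"
    by (intro subgrp_diff[OF TA_subgrp] subgrp_add[OF TA_subgrp] gammaZ tens_rel.tr_addl) auto
  finally have "rho ?X - Psi (frag_of (h + h', y)) \<in> relH" by (rule KEY)
  then have "- (rho ?X - Psi (frag_of (h + h', y))) \<in> relH" by (rule subgrp_neg[OF relH_subgrp])
  then show ?thesis by (simp add: rho_add psi_def algebra_simps)
qed

lemma psi_add2: "psi (h, y + y') - psi (h, y) - psi (h, y') \<in> relH"
proof -
  let ?X = "gammaZ (frag_of (h, y)) + gammaZ (frag_of (h, y'))"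
  have "beta ?X - frag_of (h, y + y') =
    (beta (gammaZ (frag_of (h, y))) - frag_of (h, y)) + (beta (gammaZ (frag_of (h, y'))) - frag_of (h, y'))
     - (frag_of (h, y + y') - frag_of (h, y) - frag_of (h, y'))"
    by (simp add: beta_add algebra_simps)
  also have "\<dots> \<in> TA"
    by (intro subgrp_diff[OF TA_subgrp] subgrp_add[OF TA_subgrp] gammaZ tens_rel.tr_addr) auto
  finally have "rho ?X - Psi (frag_of (h, y + y')) \<in> relH" by (rule KEY)
  then have "- (rho ?X - Psi (frag_of (h, y + y'))) \<in> relH" by (rule subgrp_neg[OF relH_subgrp])
  then show ?thesis by (simp add: rho_add psi_def algebra_simps)
qed

lemma psi_bal: "psi (t a * h, y) - psi (h, s a * y) \<in> relH"
proof -
  let ?X = "gammaZ (frag_of (h, s a * y))"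
  have "beta ?X - frag_of (t a * h, y) =
    (beta ?X - frag_of (h, s a * y)) - (frag_of (t a * h, y) - frag_of (h, s a * y))"
    by (simp add: algebra_simps)
  also have "\<dots> \<in> TA"
    by (intro subgrp_diff[OF TA_subgrp] gammaZ tens_rel.tr_bal) auto
  finally have "rho ?X - Psi (frag_of (t a * h, y)) \<in> relH" by (rule KEY)
  then have "- (rho ?X - Psi (frag_of (t a * h, y))) \<in> relH" by (rule subgrp_neg[OF relH_subgrp])
  then show ?thesis by (simp add: psi_def algebra_simps)
qed

lemma psi_zero: "psi (0, y) \<in> relH"
  using subgrp_neg[OF relH_subgrp psi_add1[of 0 0 y]] by simp

lemma tmap_TA2: "X \<in> TA \<Longrightarrow> tmap (\<lambda>u. u) (\<lambda>v. v*n) X \<in> TA"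
  using tmap_TA[of X 1 n] by simp

lemma tmult_zero_right: "tmult X 0 = 0"
  using tmult_diff_right[of X 0 0] by simp

lemma tmult_tmap_right: "tmult X (tmap (\<lambda>x. x) (\<lambda>w. w*c) Y) = tmap (\<lambda>x. x) (\<lambda>w. w*c) (tmult X Y)"
proof (induction Y rule: frag_induction[OF subset_UNIV])
  case 1 then show ?case by (simp add: tmult_zero_right tmap_eq)
next
  case (2 p) then show ?case by (cases p) (simp add: tmult_frag_of tmap_comp mult.assoc)
next
  case (3 a b) then show ?case by (simp add: tmap_diff tmult_diff_right)
qed

lemma fe_additive:
  assumes "\<And>a b. G (a + b) = G a + G b"
  shows "frag_extend (\<lambda>p. G (F p)) X = G (frag_extend F X)"
proof -
  have z: "G 0 = 0" using assms[of 0 0] by simp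
  have d: "G (a - b) = G a - G b" for a b using assms[of "a - b" b] by (simp add: algebra_simps)
  show ?thesis
    by (induction X rule: frag_induction[OF subset_UNIV]) (auto simp: z d frag_extend_diff)
qed

lemma claim1_inner:
  assumes Xb: "beta Xb - frag_of (b,1) \<in> TA"
  shows "beta (frag_extend (\<lambda>(u',v'). frag_of (u*u', v'*v*y)) Xb) - tmap (\<lambda>w. w*b) (\<lambda>w. w*y) (beta (frag_of (u,v))) \<in> TA"
proof -
  define G where "G Y = tmap (\<lambda>x. x) (\<lambda>w. w*(v*y)) (tmult (\<Delta> u) Y)" for Y
  have Gadd: "G (a + b) = G a + G b" for a b by (simp add: G_def tmult_add_right tmap_add)
  have e1: "beta (frag_extend (\<lambda>(u',v'). frag_of (u*u', v'*v*y)) Xb) =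
     frag_extend (\<lambda>(u',v'). tmap (\<lambda>x. x) (\<lambda>w. w*(v'*v*y)) (\<Delta> (u*u'))) Xb"
    by (simp add: beta_fe case_prod_unfold beta_frag_of)
  have e2: "frag_extend (\<lambda>(u',v'). tmap (\<lambda>x. x) (\<lambda>w. w*(v'*v*y)) (\<Delta> (u*u'))) Xb
     - frag_extend (\<lambda>(u',v'). tmap (\<lambda>x. x) (\<lambda>w. w*(v'*v*y)) (tmult (\<Delta> u) (\<Delta> u'))) Xb \<in> TA"
    by (rule fe_cong[OF TA_subgrp subset_UNIV])
       (auto simp: case_prod_unfold tmap_diff[symmetric] intro!: tmap_TA2 Delta_mult)
  have e3: "frag_extend (\<lambda>(u',v'). tmap (\<lambda>x. x) (\<lambda>w. w*(v'*v*y)) (tmult (\<Delta> u) (\<Delta> u'))) Xb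
     = frag_extend (\<lambda>p. G (beta (frag_of p))) Xb"
    by (rule arg_cong[where f="\<lambda>F. frag_extend F Xb"])
       (auto simp: G_def beta_frag_of tmult_tmap_right tmap_comp mult.assoc)
  have e4: "frag_extend (\<lambda>p. G (beta (frag_of p))) Xb = G (beta Xb)"
    by (simp add: fe_additive[OF Gadd] beta_expand[symmetric])
  have e5: "G (beta Xb) - G (frag_of (b,1)) \<in> TA"
    unfolding G_def tmap_diff[symmetric] tmult_diff_right[symmetric]
    by (intro tmap_TA2 tmult_TA[OF takeuchi'] Xb)
  have e6: "G (frag_of (b,1)) = tmap (\<lambda>w. w*b) (\<lambda>w. w*y) (beta (frag_of (u,v)))"
    by (simp add: G_def tmult_frag_of tmap_comp beta_frag_of mult.assoc)
  show ?thesis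
    using cg_trans[OF TA_subgrp e2[unfolded e3 e4] e5] unfolding e1 e6 .
qed

lemma claim1:
  assumes Xb: "beta Xb - frag_of (b,1) \<in> TA"
  shows "beta (frag_extend (\<lambda>(u,v). frag_extend (\<lambda>(u',v'). frag_of (u*u', v'*v*y)) Xb) Xh)
     - tmap (\<lambda>w. w*b) (\<lambda>w. w*y) (beta Xh) \<in> TA"
proof -
  have "beta (frag_extend (\<lambda>(u,v). frag_extend (\<lambda>(u',v'). frag_of (u*u', v'*v*y)) Xb) Xh) =
    frag_extend (\<lambda>(u,v). beta (frag_extend (\<lambda>(u',v'). frag_of (u*u', v'*v*y)) Xb)) Xh"
    by (simp add: beta_fe case_prod_unfold)
  moreover have "tmap (\<lambda>w. w*b) (\<lambda>w. w*y) (beta Xh) =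
    frag_extend (\<lambda>(u,v). tmap (\<lambda>w. w*b) (\<lambda>w. w*y) (beta (frag_of (u,v)))) Xh"
    by (subst beta_expand) (simp add: tmap_fe case_prod_unfold)
  moreover have "frag_extend (\<lambda>(u,v). beta (frag_extend (\<lambda>(u',v'). frag_of (u*u', v'*v*y)) Xb)) Xh -
     frag_extend (\<lambda>(u,v). tmap (\<lambda>w. w*b) (\<lambda>w. w*y) (beta (frag_of (u,v)))) Xh \<in> TA"
    by (rule fe_cong[OF TA_subgrp subset_UNIV]) (auto simp: case_prod_unfold intro: claim1_inner[OF Xb, unfolded case_prod_unfold])
  ultimately show ?thesis by simp
qed

lemma claim2:
  assumes kb: "Poly_Mapping.keys Xb \<subseteq> B \<times> UNIV" and Xb: "beta Xb - frag_of (b,1) \<in> TA"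
    and eb: "\<epsilon> b = 0"
  shows "rho (frag_extend (\<lambda>(u,v). frag_extend (\<lambda>(u',v'). frag_of (u*u', v'*v*y)) Xb) Xh) \<in> relH"
proof -
  have evb: "ev (\<lambda>(u',v'). u' * v') Xb = 0"
  proof -
    have "evL (beta Xb - frag_of (b,1)) = 0" by (rule evL_TA[OF Xb])
    then have "evL (beta Xb) = s (\<epsilon> b)" by (simp add: ev_diff)
    then show ?thesis by (simp add: evL_beta eb s_zero)
  qed
  have inner: "frag_extend (\<lambda>(u',v'). frag_of (u*u', cl (v'*v*y))) Xb \<in> relH" for u v
  proof -
    define f where "f = (\<lambda>(u'::'h,v'::'h). u' * (v'*v*y))"
    have c1: "frag_extend (\<lambda>(u',v'). frag_of (u*u', cl (v'*v*y))) Xb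
      - frag_extend (\<lambda>q. frag_of (u, cl (f q))) Xb \<in> relH"
    proof (rule fe_cong[OF relH_subgrp kb])
      fix p assume "p \<in> B \<times> (UNIV::'h set)"
      then obtain u' v' where p: "p = (u',v')" "u' \<in> B" by auto
      show "(case p of (u',v') \<Rightarrow> frag_of (u*u', cl (v'*v*y))) - frag_of (u, cl (f p)) \<in> relH"
        using tens_rel.tr_bal[where pM="(+)" and pN=pM and aM="\<lambda>h b. h*b" and aN=actM and M=UNIV and N=Mc and R=B
            and m=u and r=u' and n="cl (v'*v*y)"] p
        by (simp add: f_def actM_cl)
    qed
    have c2: "frag_extend (\<lambda>q. frag_of (u, cl (f q))) Xb - frag_of (u, cl (ev f Xb)) \<in> relH"
      by (rule fe_lin[OF relH_subgrp L_lin])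
    have "ev f Xb = ev (\<lambda>(u',v'). u' * v') Xb * (v*y)"
      unfolding ev_mult_right[symmetric] f_def by (simp add: case_prod_unfold mult.assoc)
    then have "ev f Xb = 0" by (simp add: evb)
    then have c3: "frag_of (u, cl (ev f Xb)) \<in> relH" using zero_in by simp
    show ?thesis using subgrp_add[OF relH_subgrp cg_trans[OF relH_subgrp c1 c2] c3] by simp
  qed
  show ?thesis
    unfolding rho_fe
    by (rule fe_in[OF relH_subgrp subset_UNIV]) (auto simp: case_prod_unfold rho_fe inner[unfolded case_prod_unfold])
qed

lemma psi_hb:
  assumes b: "b \<in> B" "\<epsilon> b = 0" shows "psi (h*b, y) \<in> relH"
proof -
  obtain Xb where kb: "Poly_Mapping.keys Xb \<subseteq> B \<times> UNIV" and Xb: "beta Xb - frag_of (b,1) \<in> TA"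
    using gam b(1) unfolding gamma_in_def TA_eq beta_gal by blast
  define Xh where "Xh = gammaZ (frag_of (h,1))"
  define W where "W = frag_extend (\<lambda>(u,v). frag_extend (\<lambda>(u',v'). frag_of (u*u', v'*v*y)) Xb) Xh"
  have "tmap (\<lambda>w. w*b) (\<lambda>w. w*y) (beta Xh - frag_of (h,1)) \<in> TA"
    unfolding Xh_def by (intro tmap_TA gammaZ)
  then have "tmap (\<lambda>w. w*b) (\<lambda>w. w*y) (beta Xh) - frag_of (h*b,y) \<in> TA"
    by (simp add: tmap_diff)
  with claim1[OF Xb, of y Xh] have "beta W - frag_of (h*b,y) \<in> TA"
    unfolding W_def by (rule cg_trans[OF TA_subgrp])
  then have "rho W - psi (h*b,y) \<in> relH" using KEY by fastforce
  moreover have "rho W \<in> relH" unfolding W_def by (rule claim2[OF kb Xb b(2)])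
  ultimately show ?thesis using subgrp_diff[OF relH_subgrp] by fastforce
qed

end

lemma lig_neg: "x \<in> left_ideal_gen S \<Longrightarrow> - x \<in> left_ideal_gen (S::'h::ring_1 set)"
proof (induction rule: left_ideal_gen.induct)
  case lig_zero then show ?case by (simp add: left_ideal_gen.lig_zero)
next
  case (lig_gen b h) then show ?case using left_ideal_gen.lig_gen[of b S "-h"] by simp
next
  case (lig_add x y) then show ?case using left_ideal_gen.lig_add[of "-x" S "-y"] by (simp add: add.commute)
qed

lemma lig_subgrp: "subgrp (left_ideal_gen (S::'h::ring_1 set))"
  by (auto simp: subgrp_def intro: left_ideal_gen.intros lig_neg)

lemma lig_lmult: "x \<in> left_ideal_gen S \<Longrightarrow> c * x \<in> left_ideal_gen (S::'h::ring_1 set)"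
proof (induction rule: left_ideal_gen.induct)
  case lig_zero then show ?case by (simp add: left_ideal_gen.lig_zero)
next
  case (lig_gen b h) then show ?case using left_ideal_gen.lig_gen[of b S "c*h"] by (simp add: mult.assoc)
next
  case (lig_add x y) then show ?case using left_ideal_gen.lig_add[of "c*x" S "c*y"] by (simp add: distrib_left)
qed

context HA begin

abbreviation "I \<equiv> left_ideal_gen (Bplus \<epsilon> B)"

lemma psi_I: "i \<in> I \<Longrightarrow> psi (i, y) \<in> relH"
proof (induction rule: left_ideal_gen.induct)
  case lig_zero then show ?case by (rule psi_zero)
next
  case (lig_gen b h) then show ?case using psi_hb by (simp add: Bplus_def)
next
  case (lig_add x x')
  have "(psi (x + x', y) - psi (x, y) - psi (x', y)) + psi (x, y) + psi (x', y) \<in> relH"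
    by (intro subgrp_add[OF relH_subgrp] psi_add1 lig_add.IH)
  then show ?case by simp
qed

lemma psi_cong: "h - h' \<in> I \<Longrightarrow> psi (h, y) - psi (h', y) \<in> relH"
  using subgrp_add[OF relH_subgrp psi_add1[of h' "h - h'" y] psi_I[of "h - h'" y]] by simp

definition repI where "repI C = (SOME h. h \<in> C)"

lemma repI_coset: "repI (coset I h) - h \<in> I"
  unfolding repI_def by (rule coset_rep[OF lig_subgrp])

definition Phi where "Phi X = frag_extend (\<lambda>(C,y). psi (repI C, y)) X"

abbreviation "RI \<equiv> tens_rel (coset_add I) (+) (coset_act t I) (\<lambda>a y. s a * y) (range (coset I)) (UNIV::'h set) (UNIV::'a set)"

lemma psi_repI: "psi (repI (coset I h), y) - psi (h, y) \<in> relH"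
  by (rule psi_cong[OF repI_coset])

lemma Phi_RI: "X \<in> RI \<Longrightarrow> Phi X \<in> relH"
proof (erule rel_map[OF _ relH_subgrp])
  show "Phi (x + y) = Phi x + Phi y" for x y by (simp add: Phi_def frag_extend_add)
next
  fix m m' n assume m: "m \<in> range (coset I)" "m' \<in> range (coset I)"
  have ca: "coset_add I m m' = coset I (repI m + repI m')" by (simp add: coset_add_def repI_def)
  have h: "(psi (repI (coset I (repI m + repI m')), n) - psi (repI m + repI m', n))
     + (psi (repI m + repI m', n) - psi (repI m, n) - psi (repI m', n)) \<in> relH"
    by (intro subgrp_add[OF relH_subgrp] psi_repI psi_add1)
  have eqn: "(psi (repI (coset I (repI m + repI m')), n) - psi (repI m + repI m', n))
     + (psi (repI m + repI m', n) - psi (repI m, n) - psi (repI m', n)) = 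
     psi (repI (coset I (repI m + repI m')), n) - psi (repI m, n) - psi (repI m', n)"
    by (simp add: algebra_simps)
  have eq2: "Phi (frag_of (coset_add I m m', n) - frag_of (m, n) - frag_of (m', n)) =
     psi (repI (coset I (repI m + repI m')), n) - psi (repI m, n) - psi (repI m', n)"
    by (simp add: Phi_def frag_extend_diff ca)
  show "Phi (frag_of (coset_add I m m', n) - frag_of (m, n) - frag_of (m', n)) \<in> relH"
    unfolding eq2 using h unfolding eqn .
next
  fix m n n' show "Phi (frag_of (m, n + n') - frag_of (m, n) - frag_of (m, n')) \<in> relH"
    using psi_add2 by (simp add: Phi_def frag_extend_diff)
next
  fix m r n assume m: "m \<in> range (coset I)"
  have ca: "coset_act t I m r = coset I (t r * repI m)" by (simp add: coset_act_def repI_def)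
  have "(psi (repI (coset I (t r * repI m)), n) - psi (t r * repI m, n))
     + (psi (t r * repI m, n) - psi (repI m, s r * n)) \<in> relH"
    by (intro subgrp_add[OF relH_subgrp] psi_repI psi_bal)
  then show "Phi (frag_of (coset_act t I m r, n) - frag_of (m, s r * n)) \<in> relH"
    by (simp add: Phi_def frag_extend_diff ca)
qed

lemma coinv_sub: "x \<in> coinv s t \<Delta> I \<Longrightarrow> x \<in> B"
proof -
  assume "x \<in> coinv s t \<Delta> I"
  then have D: "tmap (coset I) (\<lambda>v. v) (\<Delta> x) - frag_of (coset I 1, x) \<in> RI"
    by (simp add: coinv_def id_def)
  define P1 where "P1 = Phi (tmap (coset I) (\<lambda>v. v) (\<Delta> x))"
  define P2 where "P2 = Phi (frag_of (coset I 1, x))"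
  have "P1 - P2 \<in> relH" using Phi_RI[OF D] by (simp add: P1_def P2_def Phi_def frag_extend_diff)
  have "P1 = frag_extend (\<lambda>(u,v). psi (repI (coset I u), v)) (\<Delta> x)"
    by (simp add: P1_def Phi_def tmap_eq fe_comp case_prod_unfold)
  then have a1: "P1 - Psi (\<Delta> x) \<in> relH"
    unfolding Psi_def
    by (auto intro!: fe_cong[OF relH_subgrp subset_UNIV] simp: case_prod_unfold psi_repI[unfolded case_prod_unfold])
  have "beta (frag_of (x,1)) - \<Delta> x \<in> TA"
    by (simp add: beta_frag_of tmap_id_id subgrp_0[OF TA_subgrp])
  from KEY[OF this] have a2: "frag_of (x, cl 1) - Psi (\<Delta> x) \<in> relH" by simp
  have "cl 1 = cl 0" by (simp add: cl_eq_iff B_one)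
  then have a3: "frag_of (x, cl 1) \<in> relH" using zero_in by simp
  have p1: "P1 \<in> relH"
    using subgrp_add[OF relH_subgrp cg_trans[OF relH_subgrp a1 cg_sym[OF relH_subgrp a2]] a3] by simp
  have p2: "P2 \<in> relH" using subgrp_diff[OF relH_subgrp p1 \<open>P1 - P2 \<in> relH\<close>] by simp
  have b1: "P2 - psi (1, x) \<in> relH" unfolding P2_def Phi_def by (simp add: psi_repI)
  have "beta (frag_of (1,x)) - frag_of (1,x) = tmap (\<lambda>u. u*1) (\<lambda>v. v*x) (\<Delta> 1 - frag_of (1,1))"
    by (simp add: beta_frag_of tmap_diff)
  also have "\<dots> \<in> TA" by (intro tmap_TA Delta_one)
  finally have b2: "frag_of (1, cl x) - psi (1,x) \<in> relH" using KEY by fastforce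
  have "frag_of (1, cl x) \<in> relH"
    using subgrp_add[OF relH_subgrp cg_trans[OF relH_subgrp b2 cg_sym[OF relH_subgrp b1]] p2] by simp
  then show "x \<in> B" by (rule purity_step)
qed

lemma I_subgrp: "subgrp I" by (rule lig_subgrp)

lemma RI_subgrp: "subgrp RI" by (rule tens_rel_subgrp)

lemma tmapC_TA: "X \<in> TA \<Longrightarrow> tmap (coset I) (\<lambda>v. v) X \<in> RI"
proof (erule rel_map[OF _ RI_subgrp])
  show "tmap (coset I) (\<lambda>v. v) (x + y) = tmap (coset I) (\<lambda>v. v) x + tmap (coset I) (\<lambda>v. v) y" for x y
    by (rule tmap_add)
next
  fix m m' n :: 'h
  have "coset_add I (coset I m) (coset I m') = coset I (repI (coset I m) + repI (coset I m'))"
    by (simp add: coset_add_def repI_def)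
  also have "\<dots> = coset I (m + m')"
    using subgrp_add[OF I_subgrp repI_coset[of m] repI_coset[of m']]
    by (intro coset_eq[OF I_subgrp]) (simp add: algebra_simps)
  finally have ca: "coset_add I (coset I m) (coset I m') = coset I (m + m')" .
  have "frag_of (coset_add I (coset I m) (coset I m'), n) - frag_of (coset I m, n) - frag_of (coset I m', n) \<in> RI"
    by (rule tens_rel.tr_addl) auto
  then show "tmap (coset I) (\<lambda>v. v) (frag_of (m + m', n) - frag_of (m, n) - frag_of (m', n)) \<in> RI"
    by (simp add: tmap_diff ca)
next
  fix m n n' :: 'h
  show "tmap (coset I) (\<lambda>v. v) (frag_of (m, n + n') - frag_of (m, n) - frag_of (m, n')) \<in> RI"
    by (simp add: tmap_diff tens_rel.tr_addr)
next
  fix m n :: 'h and r :: 'a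
  have "coset_act t I (coset I m) r = coset I (t r * repI (coset I m))"
    by (simp add: coset_act_def repI_def)
  also have "\<dots> = coset I (t r * m)"
    using lig_lmult[OF repI_coset[of m], of "t r"]
    by (intro coset_eq[OF I_subgrp]) (simp add: algebra_simps)
  finally have ca: "coset_act t I (coset I m) r = coset I (t r * m)" .
  have "frag_of (coset_act t I (coset I m) r, n) - frag_of (coset I m, s r * n) \<in> RI"
    by (rule tens_rel.tr_bal) auto
  then show "tmap (coset I) (\<lambda>v. v) (frag_of (t r * m, n) - frag_of (m, s r * n)) \<in> RI"
    by (simp add: tmap_diff ca)
qed

lemma Bplus_I: "u \<in> B \<Longrightarrow> u - t (\<epsilon> u) \<in> I"
proof -
  assume u: "u \<in> B"
  have "u - t (\<epsilon> u) \<in> Bplus \<epsilon> B"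
    using B_diff[OF u B_t] by (simp add: Bplus_def eps_diff eps_t)
  from left_ideal_gen.lig_gen[OF this, of 1] show ?thesis by simp
qed

lemma coset_B: "u \<in> B \<Longrightarrow> coset I u = coset_act t I (coset I 1) (\<epsilon> u)"
proof -
  assume u: "u \<in> B"
  have "coset_act t I (coset I 1) (\<epsilon> u) = coset I (t (\<epsilon> u) * repI (coset I 1))"
    by (simp add: coset_act_def repI_def)
  also have "\<dots> = coset I u"
    using subgrp_neg[OF I_subgrp subgrp_diff[OF I_subgrp Bplus_I[OF u] lig_lmult[OF repI_coset[of 1], of "t (\<epsilon> u)"]]]
    by (intro coset_eq[OF I_subgrp]) (simp add: algebra_simps)
  finally show ?thesis by simp
qed

lemma B_sub: "b \<in> B \<Longrightarrow> b \<in> coinv s t \<Delta> I"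
proof -
  assume b: "b \<in> B"
  have "\<exists>\<delta>. (\<forall>b\<in>B. Poly_Mapping.keys (\<delta> b) \<subseteq> B \<times> UNIV) \<and> (\<forall>b\<in>B. \<delta> b - \<Delta> b \<in> tensA s t UNIV)"
    using cs unfolding comodule_subring_def by (elim conjE exE) (intro exI conjI, assumption+)
  then obtain \<delta> where kd0: "\<forall>b\<in>B. Poly_Mapping.keys (\<delta> b) \<subseteq> B \<times> UNIV"
    and dD0: "\<forall>b\<in>B. \<delta> b - \<Delta> b \<in> tensA s t UNIV" by blast
  have kd: "\<And>b. b \<in> B \<Longrightarrow> Poly_Mapping.keys (\<delta> b) \<subseteq> B \<times> UNIV" using kd0 by blast
  have dD: "\<And>b. b \<in> B \<Longrightarrow> \<delta> b - \<Delta> b \<in> TA" using dD0 TA_eq by blast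
  have c1: "tmap (coset I) (\<lambda>v. v) (\<Delta> b) - tmap (coset I) (\<lambda>v. v) (\<delta> b) \<in> RI"
    unfolding tmap_diff[symmetric] by (rule tmapC_TA, rule cg_sym[OF TA_subgrp], rule dD, rule b)
  have c2: "tmap (coset I) (\<lambda>v. v) (\<delta> b) - frag_extend (\<lambda>q. frag_of (coset I 1, (\<lambda>(u,v). s (\<epsilon> u) * v) q)) (\<delta> b) \<in> RI"
    unfolding tmap_eq
  proof (rule fe_cong[OF RI_subgrp kd[OF b]])
    fix p assume "p \<in> B \<times> (UNIV::'h set)"
    then obtain u v where p: "p = (u,v)" "u \<in> B" by auto
    have "frag_of (coset_act t I (coset I 1) (\<epsilon> u), v) - frag_of (coset I 1, s (\<epsilon> u) * v) \<in> RI"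
      by (rule tens_rel.tr_bal) auto
    then show "(case p of (x, y) \<Rightarrow> frag_of (coset I x, y)) - frag_of (coset I 1, case p of (u, v) \<Rightarrow> s (\<epsilon> u) * v) \<in> RI"
      using coset_B[OF p(2)] by (simp add: p)
  qed
  have c3: "frag_extend (\<lambda>q. frag_of (coset I 1, (\<lambda>(u,v). s (\<epsilon> u) * v) q)) (\<delta> b) - frag_of (coset I 1, evL (\<delta> b)) \<in> RI"
    by (rule fe_lin[OF RI_subgrp]) (rule tens_rel.tr_addr, auto)
  have "evL (\<delta> b - \<Delta> b) = 0" by (rule evL_TA[OF dD[OF b]])
  then have "evL (\<delta> b) = b" by (simp add: ev_diff counitL)
  then have "tmap (coset I) (\<lambda>v. v) (\<Delta> b) - frag_of (coset I 1, b) \<in> RI"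
    using cg_trans[OF RI_subgrp cg_trans[OF RI_subgrp c1 c2] c3] by simp
  then show ?thesis by (simp add: coinv_def id_def)
qed

end

theorem theorem2p13:
  fixes \<iota> :: "'k::field \<Rightarrow> 'a::ring_1" and \<kappa> :: "'k \<Rightarrow> 'h::ring_1"
    and s :: "'a \<Rightarrow> 'h" and t :: "'a \<Rightarrow> 'h"
    and \<Delta> :: "'h \<Rightarrow> ('h \<times> 'h \<Rightarrow>\<^sub>0 int)" and \<epsilon> :: "'h \<Rightarrow> 'a"
    and B :: "'h set"
  assumes "left_hopf_algebroid \<iota> \<kappa> s t \<Delta> \<epsilon>"
    and "s_flat s"
    and "comodule_subring s t \<Delta> \<epsilon> B"
    and "pure_incl B"
    and "gamma_in s t \<Delta> B"
  shows "B = coinv s t \<Delta> (left_ideal_gen (Bplus \<epsilon> B))"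
proof -
  interpret HA \<iota> \<kappa> s t \<Delta> \<epsilon> B
    using assms by (simp add: HA_def)
  show ?thesis using B_sub coinv_sub by blast
qed

end
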